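(* Let $P$ be an Eulerian poset. Suppose that to every interval $[x,y]$ of $P$ (viewed as an Eulerian poset of rank $\rho(y)-\rho(x)$) a polynomial $B'([x,y];u,v)\in\mathbb{Z}[u,v]$ is assigned such that: (a) $B'([x,x];u,v)=1$ for all $x$; (b) for $x<y$ the degree of $B'([x,y];u,v)$ in $v$ is less than $(\rho(y)-\rho(x))/2$; (c) for all $x\le y$, $$\sum_{x\le z\le y}B'([x,z];u^{-1},v^{-1})(uv)^{\rho(z)-\rho(x)}(v-u)^{\rho(y)-\rho(z)}=\sum_{x\le z\le y}B'([z,y];u,v)(uv-1)^{\rho(z)-\rho(x)}.$$ Then $B'([x,y];u,v)=B([x,y];u,v)$ for all $x\le y$; in particular $B'(P;u,v)=B(P;u,v)$.
   Context: An Eulerian poset is a finite poset with least element $\hat0$, greatest element $\hat1$, all maximal chains of the same length (the rank $d$), rank function $\rho$, and Möbius function $\mu(x,y)=(-1)^{\rho(y)-\rho(x)}$ for $x\le y$; intervals $[x,y]$ are Eulerian of rank $\rho(y)-\rho(x)$. For Eulerian $Q$ of rank $e$: $G(Q,t)=H(Q,t)=1$ if $e=0$; for $e>0$, $H(Q,t)=\sum_{\hat0<x\le\hat1}(t-1)^{\rho(x)-1}G([x,\hat1],t)$, $G(Q,t)=\tau_{<e/2}((1-t)H(Q,t))$ with $\tau_{<r}(\sum a_it^i)=\sum_{i<r}a_it^i$. $B(Q;u,v)\in\mathbb{Z}[u,v]$ is defined by $B=1$ if $e=0$ and for $e>0$ recursively by $\sum_{\hat0\le x\le\hat1}B([\hat0,x];u,v)u^{e-\rho(x)}G([x,\hat1],u^{-1}v)=G(Q,uv)$.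 *)

theory Defs
  imports Main "HOL-Computational_Algebra.Polynomial"
begin

section \<open>Finite posets as carriers P :: 'a set with the ambient order\<close>

definition is_chain :: "'a::order set \<Rightarrow> 'a set \<Rightarrow> bool" where
  "is_chain P C \<longleftrightarrow> C \<subseteq> P \<and> (\<forall>a\<in>C. \<forall>b\<in>C. a \<le> b \<or> b \<le> a)"

definition is_maximal_chain :: "'a::order set \<Rightarrow> 'a set \<Rightarrow> bool" where
  "is_maximal_chain P C \<longleftrightarrow> is_chain P C \<and> \<not> (\<exists>C'. is_chain P C' \<and> C \<subset> C')"

definition rho :: "'a::order set \<Rightarrow> 'a \<Rightarrow> nat" where
  "rho P x = Max (card ` {C. is_chain {z\<in>P. z \<le> x} C}) - 1"

text \<open>Moebius function via the standard recursion (fuel-bounded; fuel card P suffices).\<close>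
fun muf :: "'a::order set \<Rightarrow> nat \<Rightarrow> 'a \<Rightarrow> 'a \<Rightarrow> int" where
  "muf P 0 x y = (if x = y then 1 else 0)"
| "muf P (Suc n) x y = (if x = y then 1 else if x < y
      then - (\<Sum>z\<in>{z\<in>P. x \<le> z \<and> z < y}. muf P n x z) else 0)"

definition mobius :: "'a::order set \<Rightarrow> 'a \<Rightarrow> 'a \<Rightarrow> int" where
  "mobius P x y = muf P (card P) x y"

definition eulerian :: "'a::order set \<Rightarrow> bool" where
  "eulerian P \<longleftrightarrow> finite P
     \<and> (\<exists>b\<in>P. \<forall>x\<in>P. b \<le> x) \<and> (\<exists>t\<in>P. \<forall>x\<in>P. x \<le> t)
     \<and> (\<forall>C C'. is_maximal_chain P C \<and> is_maximal_chain P C' \<longrightarrow> card C = card C')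
     \<and> (\<forall>x\<in>P. \<forall>y\<in>P. x \<le> y \<longrightarrow> mobius P x y = (-1) ^ (rho P y - rho P x))"

definition trunc_half :: "nat \<Rightarrow> int poly \<Rightarrow> int poly" where
  "trunc_half e p = (\<Sum>i\<in>{i. i < e \<and> 2 * i < e}. monom (coeff p i) i)"

fun Gf :: "'a::order set \<Rightarrow> nat \<Rightarrow> 'a \<Rightarrow> 'a \<Rightarrow> int poly" where
  "Gf P 0 x y = (if x = y then 1 else 0)"
| "Gf P (Suc n) x y = (if x = y then 1 else
      trunc_half (rho P y - rho P x)
        ([:1, -1:] * (\<Sum>z\<in>{z\<in>P. x < z \<and> z \<le> y}.
              [:-1, 1:] ^ (rho P z - rho P x - 1) * Gf P n z y)))"

definition Gpol :: "'a::order set \<Rightarrow> 'a \<Rightarrow> 'a \<Rightarrow> int poly" where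
  "Gpol P x y = Gf P (card P) x y"

definition Hpol :: "'a::order set \<Rightarrow> 'a \<Rightarrow> 'a \<Rightarrow> int poly" where
  "Hpol P x y = (if x = y then 1 else
      (\<Sum>z\<in>{z\<in>P. x < z \<and> z \<le> y}. [:-1, 1:] ^ (rho P z - rho P x - 1) * Gpol P z y))"

section \<open>Two-variable polynomials: Z[u,v] as int poly poly (outer variable v, coefficients in Z[u])\<close>

definition Uvar :: "int poly poly" where "Uvar = [:[:0, 1:]:]"
definition Vvar :: "int poly poly" where "Vvar = [:0, 1:]"

definition subst_uv :: "int poly \<Rightarrow> int poly poly" where
  "subst_uv g = poly (map_poly (\<lambda>c. [:[:c:]:]) g) (Uvar * Vvar)"

text \<open>u^e g(u^{-1} v), written out coefficientwise (a polynomial since deg g <= e in all uses).\<close>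
definition homog :: "nat \<Rightarrow> int poly \<Rightarrow> int poly poly" where
  "homog e g = (\<Sum>i\<le>degree g. [:[:coeff g i:]:] * Uvar ^ (e - i) * Vvar ^ i)"

text \<open>B([x,y];u,v): sum_{x<=z<=y} B([x,z]) u^{rho y - rho z} G([z,y],u^{-1}v) = G([x,y],uv).\<close>
fun Bf :: "'a::order set \<Rightarrow> nat \<Rightarrow> 'a \<Rightarrow> 'a \<Rightarrow> int poly poly" where
  "Bf P 0 x y = (if x = y then 1 else 0)"
| "Bf P (Suc n) x y = (if x = y then 1 else if x < y then
      subst_uv (Gpol P x y)
      - (\<Sum>z\<in>{z\<in>P. x \<le> z \<and> z < y}. Bf P n x z * homog (rho P y - rho P z) (Gpol P z y))
    else 0)"

definition Bpol :: "'a::order set \<Rightarrow> 'a \<Rightarrow> 'a \<Rightarrow> int poly poly" where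
  "Bpol P x y = Bf P (card P) x y"

definition evalB :: "int poly poly \<Rightarrow> real \<Rightarrow> real \<Rightarrow> real" where
  "evalB p u v = poly (map_poly (\<lambda>q. poly (map_poly of_int q) u) p) v"

end

theory Submission
  imports Defs
begin

lemma map_poly_add_h:
  assumes "f 0 = 0" "\<And>a b. f (a + b) = f a + f b"
  shows "map_poly f (p + q) = map_poly f p + map_poly f q"
  by (intro poly_eqI) (simp add: coeff_map_poly assms)

lemma map_poly_diff_h:
  fixes f :: "'a::comm_ring_1 \<Rightarrow> 'b::comm_ring_1"
  assumes "f 0 = 0" "\<And>a b. f (a - b) = f a - f b"
  shows "map_poly f (p - q) = map_poly f p - map_poly f q"
  by (intro poly_eqI) (simp add: coeff_map_poly assms)

lemma map_poly_mult_h: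
  fixes f :: "'a::comm_ring_1 \<Rightarrow> 'b::comm_ring_1"
  assumes "f 0 = 0" "\<And>a b. f (a + b) = f a + f b" "\<And>a b. f (a * b) = f a * f b"
  shows "map_poly f (p * q) = map_poly f p * map_poly f q"
proof (induction p)
  case 0 then show ?case by simp
next
  case (pCons a p)
  have "map_poly f (pCons a p * q) = map_poly f (smult a q) + map_poly f (pCons 0 (p * q))"
    by (simp add: map_poly_add_h assms)
  also have "\<dots> = smult (f a) (map_poly f q) + pCons 0 (map_poly f p * map_poly f q)"
    by (simp add: map_poly_smult map_poly_pCons assms pCons.IH)
  also have "\<dots> = map_poly f (pCons a p) * map_poly f q"
    by (simp add: map_poly_pCons assms)
  finally show ?case .
qed

definition ev1 :: "real \<Rightarrow> int poly \<Rightarrow> real" where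
  "ev1 s q = poly (map_poly of_int q) s"

lemma ev1_add[simp]: "ev1 s (p + q) = ev1 s p + ev1 s q"
  by (simp add: ev1_def map_poly_add_h)
lemma ev1_diff[simp]: "ev1 s (p - q) = ev1 s p - ev1 s q"
  by (simp add: ev1_def map_poly_diff_h)
lemma ev1_mult[simp]: "ev1 s (p * q) = ev1 s p * ev1 s q"
  by (simp add: ev1_def map_poly_mult_h)
lemma ev1_0[simp]: "ev1 s 0 = 0" by (simp add: ev1_def)
lemma ev1_1[simp]: "ev1 s 1 = 1" by (simp add: ev1_def)
lemma ev1_uminus[simp]: "ev1 s (- p) = - ev1 s p"
  using ev1_diff[of s 0 p] by simp
lemma ev1_sum[simp]: "ev1 s (sum f A) = (\<Sum>a\<in>A. ev1 s (f a))"
  by (induction A rule: infinite_finite_induct) auto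
lemma ev1_power[simp]: "ev1 s (p ^ n) = ev1 s p ^ n"
  by (induction n) auto
lemma ev1_pCons[simp]: "ev1 s (pCons a p) = of_int a + s * ev1 s p"
  by (simp add: ev1_def map_poly_pCons)
lemma ev1_const[simp]: "ev1 s [:a:] = of_int a"
  by simp
lemma ev1_altdef: "ev1 s q = (\<Sum>i\<le>degree q. of_int (coeff q i) * s ^ i)"
  unfolding ev1_def poly_altdef
  by (simp add: coeff_map_poly degree_map_poly)

lemma ev1_altdef_le: assumes "degree q \<le> N"
  shows "ev1 s q = (\<Sum>i\<le>N. of_int (coeff q i) * s ^ i)"
proof -
  have "(\<Sum>i\<le>N. of_int (coeff q i) * s ^ i) = (\<Sum>i\<le>degree q. of_int (coeff q i) * s ^ i)"
    by (rule sum.mono_neutral_right) (auto simp: assms coeff_eq_0)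
  then show ?thesis by (simp add: ev1_altdef)
qed

lemma int_poly_eq_ev1:
  assumes "\<And>s. s \<noteq> 0 \<Longrightarrow> ev1 s p = ev1 s q"
  shows "p = q"
proof -
  let ?r = "map_poly (of_int::int\<Rightarrow>real) (p - q)"
  have "?r = 0"
  proof (rule ccontr)
    assume "?r \<noteq> 0"
    then have "finite {x. poly ?r x = 0}" by (rule poly_roots_finite)
    moreover have "{x. x \<noteq> 0} \<subseteq> {x. poly ?r x = 0}"
      using assms by (auto simp: ev1_def[symmetric] simp del: ev1_diff) (simp)
    moreover have "infinite {x::real. x \<noteq> 0}"
    proof
      assume "finite {x::real. x \<noteq> 0}"
      then have "finite (insert 0 {x::real. x \<noteq> 0})" by simp
      moreover have "insert 0 {x::real. x \<noteq> 0} = UNIV" by auto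
      ultimately show False by (simp add: infinite_UNIV_char_0)
    qed
    ultimately show False using finite_subset by blast
  qed
  then have "\<forall>n. coeff (p - q) n = 0"
    by (metis coeff_0 coeff_map_poly of_int_0 of_int_eq_0_iff)
  then show ?thesis by (simp add: poly_eq_iff)
qed

lemma evalB_ev1: "evalB p u v = poly (map_poly (ev1 u) p) v"
  by (simp add: evalB_def ev1_def[abs_def])

lemma evalB_add[simp]: "evalB (p + q) u v = evalB p u v + evalB q u v"
  by (simp add: evalB_ev1 map_poly_add_h)
lemma evalB_diff[simp]: "evalB (p - q) u v = evalB p u v - evalB q u v"
  by (simp add: evalB_ev1 map_poly_diff_h)
lemma evalB_mult[simp]: "evalB (p * q) u v = evalB p u v * evalB q u v"
  by (simp add: evalB_ev1 map_poly_mult_h)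
lemma evalB_0[simp]: "evalB 0 u v = 0" by (simp add: evalB_ev1)
lemma evalB_1[simp]: "evalB 1 u v = 1" by (simp add: evalB_ev1)
lemma evalB_sum[simp]: "evalB (sum f A) u v = (\<Sum>a\<in>A. evalB (f a) u v)"
  by (induction A rule: infinite_finite_induct) auto
lemma evalB_power[simp]: "evalB (p ^ n) u v = evalB p u v ^ n"
  by (induction n) auto
lemma map_poly_const_h: "f 0 = 0 \<Longrightarrow> map_poly f [:c:] = [:f c:]"
  using map_poly_pCons[of f c 0] by simp

lemma evalB_const[simp]: "evalB [:[:a:]:] u v = of_int a"
  by (simp add: evalB_ev1 ev1_def map_poly_const_h)
lemma evalB_Uvar[simp]: "evalB Uvar u v = u"
  by (simp add: evalB_ev1 ev1_def Uvar_def map_poly_const_h map_poly_pCons)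
lemma evalB_Vvar[simp]: "evalB Vvar u v = v"
  by (simp add: evalB_ev1 ev1_def Vvar_def map_poly_pCons map_poly_const_h)

lemma subst_uv_pCons: "subst_uv (pCons a p) = [:[:a:]:] + Uvar * Vvar * subst_uv p"
  by (simp add: subst_uv_def map_poly_pCons)

lemma subst_uv_0[simp]: "subst_uv 0 = 0" by (simp add: subst_uv_def)

lemma evalB_pconst: "evalB [:c:] u v = ev1 u c"
  by (simp add: evalB_ev1 map_poly_const_h)

lemma evalB_smult[simp]: "evalB (smult c p) u v = ev1 u c * evalB p u v"
proof -
  have "smult c p = [:c:] * p" by simp
  then show ?thesis by (simp only: evalB_mult evalB_pconst)
qed

lemma evalB_subst_uv: "evalB (subst_uv g) u v = ev1 (u * v) g"
proof (induction g)
  case (pCons a p)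
  show ?case
    by (simp only: subst_uv_pCons evalB_add evalB_mult evalB_const evalB_Uvar evalB_Vvar ev1_pCons pCons.IH)
qed simp

lemma degree_subst_uv: "degree (subst_uv g) \<le> degree g"
proof (induction g)
  case 0 then show ?case by (simp add: subst_uv_def)
next
  case (pCons a p)
  have dU: "degree Uvar = 0" by (simp add: Uvar_def)
  have dV: "degree Vvar = 1" by (simp add: Vvar_def)
  show ?case
  proof (cases "p = 0")
    case True then show ?thesis by (simp add: subst_uv_pCons)
  next
    case False
    have "degree (Uvar * Vvar * subst_uv p) \<le> 1 + degree p"
      using degree_mult_le[of "Uvar * Vvar" "subst_uv p"] degree_mult_le[of Uvar Vvar] dU dV pCons.IH
      by linarith
    then have "degree ([:[:a:]:] + Uvar * Vvar * subst_uv p) \<le> 1 + degree p"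
      by (intro degree_add_le) simp_all
    then show ?thesis using False by (simp add: subst_uv_pCons)
  qed
qed

lemma degree_homog: "degree (homog e g) \<le> degree g"
  unfolding homog_def
proof (rule degree_sum_le)
  fix i assume "i \<in> {..degree g}"
  then have i: "i \<le> degree g" by simp
  have "degree ([:[:coeff g i:]:] * Uvar ^ (e - i) * Vvar ^ i) \<le> degree ([:[:coeff g i:]:] * Uvar ^ (e - i)) + degree (Vvar ^ i)"
    by (rule degree_mult_le)
  moreover have "degree ([:[:coeff g i:]:] * Uvar ^ (e - i)) = 0"
  proof -
    have "degree (Uvar ^ (e - i)) = 0" using degree_power_le[of Uvar "e - i"] by (simp add: Uvar_def)
    then show ?thesis using degree_mult_le[of "[:[:coeff g i:]:]" "Uvar ^ (e - i)"] by simp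
  qed
  moreover have "degree (Vvar ^ i) \<le> i"
    using degree_power_le[of Vvar i] by (simp add: Vvar_def)
  ultimately show "degree ([:[:coeff g i:]:] * Uvar ^ (e - i) * Vvar ^ i) \<le> degree g" using i by linarith
qed simp

lemma evalB_homog:
  assumes "degree g \<le> e" "u \<noteq> 0"
  shows "evalB (homog e g) u v = u ^ e * ev1 (v / u) g"
proof -
  have "evalB (homog e g) u v = (\<Sum>i\<le>degree g. of_int (coeff g i) * u ^ (e - i) * v ^ i)"
    by (simp add: homog_def mult.assoc)
  also have "\<dots> = (\<Sum>i\<le>degree g. u ^ e * (of_int (coeff g i) * (v / u) ^ i))"
  proof (rule sum.cong)
    fix i assume "i \<in> {..degree g}"
    then have "i \<le> e" using assms by simp
    then have "u ^ e = u ^ (e - i) * u ^ i" by (simp add: power_add[symmetric])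
    then show "of_int (coeff g i) * u ^ (e - i) * v ^ i = u ^ e * (of_int (coeff g i) * (v / u) ^ i)"
      using assms(2) by (simp add: power_divide field_simps)
  qed simp
  also have "\<dots> = u ^ e * ev1 (v / u) g"
    by (simp add: ev1_altdef sum_distrib_left)
  finally show ?thesis .
qed


lemma rho_mono:
  assumes fin: "finite P" and xP: "x \<in> P" and yP: "y \<in> P" and xy: "x < y"
  shows "rho P x < rho P y"
proof -
  define Cs where "Cs w = {C. is_chain {z\<in>P. z \<le> w} C}" for w
  have finCs: "finite (Cs w)" for w
  proof -
    have "Cs w \<subseteq> Pow {z\<in>P. z \<le> w}" by (auto simp: Cs_def is_chain_def)
    then show ?thesis by (rule finite_subset) (use fin in auto)
  qed
  have finC: "C \<in> Cs w \<Longrightarrow> finite C" for C w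
    using fin by (auto simp: Cs_def is_chain_def intro: finite_subset)
  have "{x} \<in> Cs x" using xP by (auto simp: Cs_def is_chain_def)
  then have ne: "card ` Cs x \<noteq> {}" by auto
  obtain C where C: "C \<in> Cs x" "card C = Max (card ` Cs x)"
    using Max_in[OF finite_imageI[OF finCs] ne] by auto
  have "card {x} \<le> Max (card ` Cs x)"
    using \<open>{x} \<in> Cs x\<close> finCs by (intro Max_ge) (auto intro!: image_eqI[where x="{x}"])
  then have C1: "card C \<ge> 1" using C by simp
  have yC: "y \<notin> C" using C xy by (auto simp: Cs_def is_chain_def)
  have "insert y C \<in> Cs y"
    using C xy yP by (auto simp: Cs_def is_chain_def intro: order.trans)
  then have "card (insert y C) \<le> Max (card ` Cs y)"
    using finCs by (intro Max_ge) auto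
  then have "card C + 1 \<le> Max (card ` Cs y)"
    using yC finC[OF C(1)] by simp
  then show ?thesis using C C1 unfolding rho_def Cs_def by simp
qed

lemma rho_le: "finite P \<Longrightarrow> x \<in> P \<Longrightarrow> y \<in> P \<Longrightarrow> x \<le> y \<Longrightarrow> rho P x \<le> rho P y"
proof (cases "x = y")
  case False
  assume "finite P" "x \<in> P" "y \<in> P" "x \<le> y"
  then have "x < y" using False by simp
  then show ?thesis using rho_mono[of P x y] \<open>finite P\<close> \<open>x \<in> P\<close> \<open>y \<in> P\<close> by simp
qed simp

lemma muf_refl[simp]: "muf P n x x = 1" by (cases n) auto

lemma muf_stab:
  assumes fin: "finite P"
  shows "card {z\<in>P. x \<le> z \<and> z < y} \<le> n \<Longrightarrow> card {z\<in>P. x \<le> z \<and> z < y} \<le> m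
    \<Longrightarrow> muf P n x y = muf P m x y"
proof (induction "card {z\<in>P. x \<le> z \<and> z < y}" arbitrary: y n m rule: less_induct)
  case less
  define S where "S = {z\<in>P. x \<le> z \<and> z < y}"
  show ?case
  proof (cases "x < y")
    case False
    then show ?thesis by (cases n; cases m) auto
  next
    case xy: True
    show ?thesis
    proof (cases "S = {}")
      case True
      then show ?thesis using xy by (cases n; cases m) (simp_all add: S_def[symmetric])
    next
      case False
      have finS: "finite S" using fin by (simp add: S_def)
      then have cS: "card S > 0" using False by auto
      then obtain n' m' where nm: "n = Suc n'" "m = Suc m'"
        using less.prems by (cases n; cases m) (auto simp: S_def)
      have "muf P n' x z = muf P m' x z" if z: "z \<in> S" for z
      proof -
        have sub: "{w\<in>P. x \<le> w \<and> w < z} \<subset> S"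
          using z by (auto simp: S_def intro: order.strict_trans2)
        have "card {w\<in>P. x \<le> w \<and> w < z} < card S"
          by (rule psubset_card_mono[OF finS sub])
        then show ?thesis using less.prems nm by (intro less.hyps) (auto simp: S_def)
      qed
      then show ?thesis using nm xy by (simp add: S_def[symmetric])
    qed
  qed
qed

lemma mobius_rec:
  assumes fin: "finite P" and xy: "x < y"
  shows "mobius P x y = - (\<Sum>z\<in>{z\<in>P. x \<le> z \<and> z < y}. mobius P x z)"
proof -
  have c: "card {z\<in>P. x \<le> z \<and> z < w} \<le> card P" for w
    using fin by (intro card_mono) auto
  have "mobius P x y = muf P (Suc (card P)) x y"
    unfolding mobius_def using c[of y] by (intro muf_stab[OF fin]) auto
  then show ?thesis using xy by (simp add: mobius_def)
qed

lemma trunc_half_0[simp]: "trunc_half e 0 = 0" by (simp add: trunc_half_def)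

lemma Gf_stab:
  assumes fin: "finite P"
  shows "card {z\<in>P. x < z \<and> z \<le> y} \<le> n \<Longrightarrow> card {z\<in>P. x < z \<and> z \<le> y} \<le> m
    \<Longrightarrow> Gf P n x y = Gf P m x y"
proof (induction "card {z\<in>P. x < z \<and> z \<le> y}" arbitrary: x n m rule: less_induct)
  case less
  define S where "S = {z\<in>P. x < z \<and> z \<le> y}"
  show ?case
  proof (cases "x = y")
    case True
    then show ?thesis by (cases n; cases m) auto
  next
    case xy: False
    show ?thesis
    proof (cases "S = {}")
      case True
      then show ?thesis using xy by (cases n; cases m) (simp_all add: S_def[symmetric])
    next
      case False
      have finS: "finite S" using fin by (simp add: S_def)
      then have cS: "card S > 0" using False by auto
      then obtain n' m' where nm: "n = Suc n'" "m = Suc m'"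
        using less.prems by (cases n; cases m) (auto simp: S_def)
      have "Gf P n' z y = Gf P m' z y" if z: "z \<in> S" for z
      proof -
        have sub: "{w\<in>P. z < w \<and> w \<le> y} \<subset> S"
          using z by (auto simp: S_def intro: order.strict_trans)
        have "card {w\<in>P. z < w \<and> w \<le> y} < card S"
          by (rule psubset_card_mono[OF finS sub])
        then show ?thesis using less.prems nm by (intro less.hyps) (auto simp: S_def)
      qed
      then show ?thesis using nm xy by (simp add: S_def[symmetric])
    qed
  qed
qed

lemma Gpol_refl[simp]: "Gpol P x x = 1" by (cases "card P") (auto simp: Gpol_def)

lemma Gpol_rec:
  assumes fin: "finite P" and xy: "x \<noteq> y"
  shows "Gpol P x y = trunc_half (rho P y - rho P x)
        ([:1, -1:] * (\<Sum>z\<in>{z\<in>P. x < z \<and> z \<le> y}.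
              [:-1, 1:] ^ (rho P z - rho P x - 1) * Gpol P z y))"
proof -
  have c: "card {z\<in>P. w < z \<and> z \<le> y} \<le> card P" for w
    using fin by (intro card_mono) auto
  have "Gpol P x y = Gf P (Suc (card P)) x y"
    unfolding Gpol_def using c[of x] by (intro Gf_stab[OF fin]) auto
  then show ?thesis using xy by (simp add: Gpol_def)
qed

lemma Bf_stab:
  assumes fin: "finite P" and xP: "x \<in> P"
  shows "card {z\<in>P. x \<le> z \<and> z < y} \<le> n \<Longrightarrow> card {z\<in>P. x \<le> z \<and> z < y} \<le> m
    \<Longrightarrow> Bf P n x y = Bf P m x y"
proof (induction "card {z\<in>P. x \<le> z \<and> z < y}" arbitrary: y n m rule: less_induct)
  case less
  define S where "S = {z\<in>P. x \<le> z \<and> z < y}"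
  show ?case
  proof (cases "x < y")
    case False
    then show ?thesis by (cases n; cases m) auto
  next
    case xy: True
    have "x \<in> S" using xP xy by (simp add: S_def)
    have finS: "finite S" using fin by (simp add: S_def)
    then have cS: "card S > 0" using \<open>x \<in> S\<close> by (auto simp: card_gt_0_iff)
    then obtain n' m' where nm: "n = Suc n'" "m = Suc m'"
      using less.prems by (cases n; cases m) (auto simp: S_def)
    have "Bf P n' x z = Bf P m' x z" if z: "z \<in> S" for z
    proof -
      have sub: "{w\<in>P. x \<le> w \<and> w < z} \<subset> S"
        using z by (auto simp: S_def intro: order.strict_trans2)
      have "card {w\<in>P. x \<le> w \<and> w < z} < card S"
        by (rule psubset_card_mono[OF finS sub])
      then show ?thesis using less.prems nm by (intro less.hyps) (auto simp: S_def)
    qed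
    then show ?thesis using nm xy by (simp add: S_def[symmetric])
  qed
qed

lemma Bpol_refl[simp]: "Bpol P x x = 1" by (cases "card P") (auto simp: Bpol_def)

lemma Bpol_rec:
  assumes fin: "finite P" and xP: "x \<in> P" and xy: "x < y"
  shows "Bpol P x y = subst_uv (Gpol P x y)
      - (\<Sum>z\<in>{z\<in>P. x \<le> z \<and> z < y}. Bpol P x z * homog (rho P y - rho P z) (Gpol P z y))"
proof -
  have c: "card {z\<in>P. x \<le> z \<and> z < w} \<le> card P" for w
    using fin by (intro card_mono) auto
  have "Bpol P x y = Bf P (Suc (card P)) x y"
    unfolding Bpol_def using c[of y] by (intro Bf_stab[OF fin xP]) auto
  then show ?thesis using xy by (simp add: Bpol_def)
qed


abbreviation IIcc :: "'a::order set \<Rightarrow> 'a \<Rightarrow> 'a \<Rightarrow> 'a set" where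
  "IIcc P x y \<equiv> {z\<in>P. x \<le> z \<and> z \<le> y}"
abbreviation IIoc :: "'a::order set \<Rightarrow> 'a \<Rightarrow> 'a \<Rightarrow> 'a set" where
  "IIoc P x y \<equiv> {z\<in>P. x < z \<and> z \<le> y}"

lemma euler_sum:
  assumes eul: "eulerian P" and xP: "x \<in> P" and yP: "y \<in> P" and xy: "x < y"
  shows "(\<Sum>z\<in>IIcc P x y. (-1::real) ^ (rho P z - rho P x)) = 0"
proof -
  have fin: "finite P" using eul by (simp add: eulerian_def)
  have mob: "z \<in> P \<Longrightarrow> x \<le> z \<Longrightarrow> mobius P x z = (-1) ^ (rho P z - rho P x)" for z
    using eul xP by (simp add: eulerian_def)
  have "IIcc P x y = insert y {z\<in>P. x \<le> z \<and> z < y}" using xy yP by auto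
  then have "(\<Sum>z\<in>IIcc P x y. (-1::int) ^ (rho P z - rho P x))
      = (-1) ^ (rho P y - rho P x) + (\<Sum>z\<in>{z\<in>P. x \<le> z \<and> z < y}. (-1::int) ^ (rho P z - rho P x))"
    using fin by simp
  also have "\<dots> = mobius P x y + (\<Sum>z\<in>{z\<in>P. x \<le> z \<and> z < y}. mobius P x z)"
    using mob yP xy by simp
  also have "\<dots> = 0" using mobius_rec[OF fin xy] by simp
  finally have "(\<Sum>z\<in>IIcc P x y. (-1::int) ^ (rho P z - rho P x)) = 0" .
  then have "real_of_int (\<Sum>z\<in>IIcc P x y. (-1::int) ^ (rho P z - rho P x)) = 0" by simp
  then show ?thesis by simp
qed

lemma IIcc_refl: "x \<in> P \<Longrightarrow> IIcc P x x = {x}" by auto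

lemma swap_Icc:
  assumes fin: "finite P"
  shows "(\<Sum>z\<in>IIcc P x y. \<Sum>w\<in>IIcc P z y. f z w) = (\<Sum>w\<in>IIcc P x y. \<Sum>z\<in>IIcc P x w. f z w)"
proof -
  have "(\<Sum>z\<in>IIcc P x y. \<Sum>w\<in>IIcc P z y. f z w) = (\<Sum>z\<in>IIcc P x y. \<Sum>w\<in>{w. w \<in> IIcc P x y \<and> z \<le> w}. f z w)"
    by (intro sum.cong refl) (auto intro: order.trans)
  also have "\<dots> = (\<Sum>w\<in>IIcc P x y. \<Sum>z\<in>{z. z \<in> IIcc P x y \<and> z \<le> w}. f z w)"
    by (rule sum.swap_restrict) (use fin in auto)
  also have "\<dots> = (\<Sum>w\<in>IIcc P x y. \<Sum>z\<in>IIcc P x w. f z w)"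
    by (intro sum.cong refl) (auto intro: order.trans)
  finally show ?thesis .
qed

lemma swap_Ioc:
  assumes fin: "finite P"
  shows "(\<Sum>z\<in>IIoc P x y. \<Sum>w\<in>IIcc P z y. f z w) = (\<Sum>w\<in>IIoc P x y. \<Sum>z\<in>IIoc P x w. f z w)"
proof -
  have "(\<Sum>z\<in>IIoc P x y. \<Sum>w\<in>IIcc P z y. f z w) = (\<Sum>z\<in>IIoc P x y. \<Sum>w\<in>{w. w \<in> IIoc P x y \<and> z \<le> w}. f z w)"
    by (intro sum.cong refl) (auto intro: order.strict_trans2)
  also have "\<dots> = (\<Sum>w\<in>IIoc P x y. \<Sum>z\<in>{z. z \<in> IIoc P x y \<and> z \<le> w}. f z w)"
    by (rule sum.swap_restrict) (use fin in auto)
  also have "\<dots> = (\<Sum>w\<in>IIoc P x y. \<Sum>z\<in>IIoc P x w. f z w)"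
    by (intro sum.cong refl) (auto intro: order.trans)
  finally show ?thesis .
qed

definition rv :: "nat \<Rightarrow> int poly \<Rightarrow> int poly" where
  "rv e p = (\<Sum>i\<le>e. monom (coeff p i) (e - i))"

lemma coeff_rv: "coeff (rv e p) k = (if k \<le> e then coeff p (e - k) else 0)"
proof (cases "k \<le> e")
  case True
  have "coeff (rv e p) k = (\<Sum>i\<le>e. if i = e - k then coeff p i else 0)"
    unfolding rv_def coeff_sum using True by (intro sum.cong refl) auto
  also have "\<dots> = coeff p (e - k)" by simp
  finally show ?thesis using True by simp
next
  case False
  then have "coeff (rv e p) k = 0" unfolding rv_def coeff_sum by (intro sum.neutral) auto
  then show ?thesis using False by simp
qed

lemma ev1_monom[simp]: "ev1 s (monom a n) = of_int a * s ^ n"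
  by (simp add: ev1_def map_poly_monom poly_monom)

lemma ev1_rv:
  assumes "degree p \<le> e" "s \<noteq> 0"
  shows "ev1 s (rv e p) = s ^ e * ev1 (1 / s) p"
proof -
  have "ev1 s (rv e p) = (\<Sum>i\<le>e. of_int (coeff p i) * s ^ (e - i))"
    by (simp add: rv_def)
  also have "\<dots> = (\<Sum>i\<le>e. s ^ e * (of_int (coeff p i) * (1 / s) ^ i))"
  proof (intro sum.cong refl)
    fix i assume "i \<in> {..e}"
    then have "s ^ e = s ^ (e - i) * s ^ i" by (simp add: power_add[symmetric])
    then show "of_int (coeff p i) * s ^ (e - i) = s ^ e * (of_int (coeff p i) * (1 / s) ^ i)"
      using assms(2) by (simp add: power_one_over field_simps)
  qed
  also have "\<dots> = s ^ e * ev1 (1 / s) p"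
    by (simp add: ev1_altdef_le[OF assms(1)] sum_distrib_left)
  finally show ?thesis .
qed

lemma coeff_trunc_half: "coeff (trunc_half e p) k = (if k < e \<and> 2 * k < e then coeff p k else 0)"
proof -
  have fin: "finite {i. i < e \<and> 2 * i < e}" by simp
  have "coeff (trunc_half e p) k = (\<Sum>i\<in>{i. i < e \<and> 2 * i < e}. if i = k then coeff p i else 0)"
    unfolding trunc_half_def coeff_sum by (intro sum.cong refl) auto
  also have "\<dots> = (if k < e \<and> 2 * k < e then coeff p k else 0)"
    using fin by (simp add: sum.delta')
  finally show ?thesis .
qed


lemma KLS:
  assumes eul: "eulerian P" and yP: "y \<in> P"
  shows "x \<in> P \<Longrightarrow> x \<le> y \<Longrightarrow>
    (x \<noteq> y \<longrightarrow> 2 * degree (Gpol P x y) < rho P y - rho P x) \<and>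
    (\<forall>s::real. s \<noteq> 0 \<longrightarrow> s ^ (rho P y - rho P x) * ev1 (1 / s) (Gpol P x y)
        = (\<Sum>z\<in>IIcc P x y. (s - 1) ^ (rho P z - rho P x) * ev1 s (Gpol P z y)))"
proof (induction "card (IIoc P x y)" arbitrary: x rule: less_induct)
  case less
  have fin: "finite P" using eul by (simp add: eulerian_def)
  show ?case
  proof (cases "x = y")
    case True
    then show ?thesis using less.prems by (simp add: IIcc_refl)
  next
    case False
    then have xy: "x < y" using less.prems by simp
    have xP: "x \<in> P" using less.prems by simp
    define e where "e = rho P y - rho P x"
    define R where "R = (\<Sum>z\<in>IIoc P x y. [:-1, 1:] ^ (rho P z - rho P x) * Gpol P z y)"
    have finI: "finite (IIoc P x y)" using fin by simp
    have IH: "(z \<noteq> y \<longrightarrow> 2 * degree (Gpol P z y) < rho P y - rho P z) \<and>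
      (\<forall>s::real. s \<noteq> 0 \<longrightarrow> s ^ (rho P y - rho P z) * ev1 (1 / s) (Gpol P z y)
        = (\<Sum>w\<in>IIcc P z y. (s - 1) ^ (rho P w - rho P z) * ev1 s (Gpol P w y)))"
      if z: "z \<in> IIoc P x y" for z
    proof (rule less.hyps)
      have "IIoc P z y \<subset> IIoc P x y" using z by (auto intro: order.strict_trans)
      then show "card (IIoc P z y) < card (IIoc P x y)" by (rule psubset_card_mono[OF finI])
    qed (use z in auto)
    have rk: "rho P x \<le> rho P z \<and> rho P z \<le> rho P y" if "z \<in> IIcc P x y" for z
      using that rho_le[OF fin] xP yP by auto
    have rkz: "rho P x \<le> rho P z \<and> rho P z \<le> rho P y" if "z \<in> IIoc P x y" for z
      using rk[of z] that by auto
    have rk1: "rho P x < rho P z" if "z \<in> IIoc P x y" for z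
      using that rho_mono[OF fin] xP by auto
    have e0: "e > 0" unfolding e_def using rho_mono[OF fin xP yP xy] by simp
    have degG: "degree (Gpol P z y) \<le> rho P y - rho P z" if z: "z \<in> IIoc P x y" for z
    proof (cases "z = y")
      case True then show ?thesis by simp
    next
      case False then show ?thesis using IH[OF z] by linarith
    qed
    have G_eq: "Gpol P x y = trunc_half e (- R)"
    proof -
      have "[:1, -1:] * (\<Sum>z\<in>IIoc P x y. [:-1, 1:] ^ (rho P z - rho P x - 1) * Gpol P z y) = - R"
        unfolding R_def sum_distrib_left sum_negf[symmetric]
      proof (intro sum.cong refl)
        fix z assume z: "z \<in> IIoc P x y"
        obtain m where m: "rho P z - rho P x = Suc m" using rk1[OF z]
          by (metis Suc_diff_Suc)
        show "[:1, -1:] * ([:-1, 1:] ^ (rho P z - rho P x - 1) * Gpol P z y)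
            = - ([:-1, 1:] ^ (rho P z - rho P x) * Gpol P z y)" 
        proof -
          have q: "[:1, -1:] = - [:-1, 1::int:]" by simp
          show ?thesis unfolding m q power_Suc diff_Suc_1 by (simp only: mult_minus_left mult.assoc)
        qed
      qed
      then show ?thesis using Gpol_rec[OF fin False] by (simp add: e_def)
    qed
    have degR: "degree R \<le> e"
      unfolding R_def
    proof (rule degree_sum_le[OF finI])
      fix z assume z: "z \<in> IIoc P x y"
      have d1: "degree ([:-1, 1:] ^ (rho P z - rho P x) * Gpol P z y)
          \<le> degree ([:-1::int, 1:] ^ (rho P z - rho P x)) + degree (Gpol P z y)"
        using degree_mult_le by blast
      have d2: "degree ([:-1::int, 1:] ^ (rho P z - rho P x)) \<le> rho P z - rho P x"
        using degree_power_le[of "[:-1::int, 1:]" "rho P z - rho P x"] by simp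
      show "degree ([:-1, 1:] ^ (rho P z - rho P x) * Gpol P z y) \<le> e" 
      proof -
        have "rho P x \<le> rho P z \<and> rho P z \<le> rho P y" using rk[of z] z by auto
        then show ?thesis using d1 d2 degG[OF z] unfolding e_def by linarith
      qed
    qed
    have evR: "ev1 s (rv e R) = ev1 s (- R)" if s: "s \<noteq> 0" for s :: real
    proof -
      have "ev1 s (rv e R) = s ^ e * ev1 (1 / s) R" by (rule ev1_rv[OF degR s])
      also have "\<dots> = (\<Sum>z\<in>IIoc P x y. (1 - s) ^ (rho P z - rho P x) *
            (s ^ (rho P y - rho P z) * ev1 (1 / s) (Gpol P z y)))"
        unfolding R_def ev1_sum sum_distrib_left
      proof (intro sum.cong refl)
        fix z assume z: "z \<in> IIoc P x y"
        have ee: "s ^ e = s ^ (rho P z - rho P x) * s ^ (rho P y - rho P z)"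
          unfolding e_def power_add[symmetric] using rkz[OF z] by simp
        define k where "k = rho P z - rho P x"
        define m where "m = rho P y - rho P z"
        have h1: "s * (1 / s - 1) = 1 - s" using s by (simp add: field_simps)
        have hk: "(1 - s) ^ k = s ^ k * (1 / s - 1) ^ k"
          by (simp only: power_mult_distrib[symmetric] h1)
        have ev: "ev1 (1 / s) ([:-1, 1:] ^ k * Gpol P z y) = (1 / s - 1) ^ k * ev1 (1 / s) (Gpol P z y)"
          by simp
        show "s ^ e * ev1 (1 / s) ([:-1, 1:] ^ (rho P z - rho P x) * Gpol P z y) =
            (1 - s) ^ (rho P z - rho P x) * (s ^ (rho P y - rho P z) * ev1 (1 / s) (Gpol P z y))"
          unfolding ee k_def[symmetric] m_def[symmetric] ev hk
          by (simp only: mult.assoc mult.commute mult.left_commute)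
      qed
      also have "\<dots> = (\<Sum>z\<in>IIoc P x y. \<Sum>w\<in>IIcc P z y.
            (-1) ^ (rho P z - rho P x) * ((s - 1) ^ (rho P w - rho P x) * ev1 s (Gpol P w y)))"
      proof (intro sum.cong refl)
        fix z assume z: "z \<in> IIoc P x y"
        have "(1 - s) ^ (rho P z - rho P x) * (s ^ (rho P y - rho P z) * ev1 (1 / s) (Gpol P z y))
          = (1 - s) ^ (rho P z - rho P x) * (\<Sum>w\<in>IIcc P z y. (s - 1) ^ (rho P w - rho P z) * ev1 s (Gpol P w y))"
          using IH[OF z] s by simp
        also have "\<dots> = (\<Sum>w\<in>IIcc P z y.
            (-1) ^ (rho P z - rho P x) * ((s - 1) ^ (rho P w - rho P x) * ev1 s (Gpol P w y)))"
          unfolding sum_distrib_left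
        proof (intro sum.cong refl)
          fix w assume w: "w \<in> IIcc P z y"
          have "rho P z \<le> rho P w" using rho_le[OF fin] w z by auto
          then have pw: "(s - 1) ^ (rho P w - rho P x) = (s - 1) ^ (rho P z - rho P x) * (s - 1) ^ (rho P w - rho P z)"
            unfolding power_add[symmetric] using rkz[OF z] by simp
          have h1: "1 - s = (-1) * (s - 1)" by simp
          have hk: "(1 - s) ^ (rho P z - rho P x) = (-1) ^ (rho P z - rho P x) * (s - 1) ^ (rho P z - rho P x)"
            by (simp only: power_mult_distrib[symmetric] h1[symmetric])
          show "(1 - s) ^ (rho P z - rho P x) * ((s - 1) ^ (rho P w - rho P z) * ev1 s (Gpol P w y)) =
              (-1) ^ (rho P z - rho P x) * ((s - 1) ^ (rho P w - rho P x) * ev1 s (Gpol P w y))"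
            unfolding pw hk by (simp only: mult.assoc)
        qed
        finally show "(1 - s) ^ (rho P z - rho P x) * (s ^ (rho P y - rho P z) * ev1 (1 / s) (Gpol P z y)) =
          (\<Sum>w\<in>IIcc P z y. (-1) ^ (rho P z - rho P x) * ((s - 1) ^ (rho P w - rho P x) * ev1 s (Gpol P w y)))" .
      qed
      also have "\<dots> = (\<Sum>w\<in>IIoc P x y. \<Sum>z\<in>IIoc P x w.
            (-1) ^ (rho P z - rho P x) * ((s - 1) ^ (rho P w - rho P x) * ev1 s (Gpol P w y)))"
        by (rule swap_Ioc[OF fin])
      also have "\<dots> = (\<Sum>w\<in>IIoc P x y. - ((s - 1) ^ (rho P w - rho P x) * ev1 s (Gpol P w y)))"
        unfolding sum_distrib_right[symmetric]
      proof (intro sum.cong refl)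
        fix w assume w: "w \<in> IIoc P x y"
        have "IIcc P x w = insert x (IIoc P x w)" using w xP by auto
        then have "(\<Sum>z\<in>IIcc P x w. (-1::real) ^ (rho P z - rho P x)) = 1 + (\<Sum>z\<in>IIoc P x w. (-1) ^ (rho P z - rho P x))"
          using fin by simp
        moreover have "(\<Sum>z\<in>IIcc P x w. (-1::real) ^ (rho P z - rho P x)) = 0"
          using euler_sum[OF eul xP, of w] w by auto
        ultimately have "(\<Sum>z\<in>IIoc P x w. (-1::real) ^ (rho P z - rho P x)) = -1" by simp
        then show "(\<Sum>z\<in>IIoc P x w. (-1) ^ (rho P z - rho P x)) * ((s - 1) ^ (rho P w - rho P x) * ev1 s (Gpol P w y))
          = - ((s - 1) ^ (rho P w - rho P x) * ev1 s (Gpol P w y))" by simp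
      qed
      also have "\<dots> = ev1 s (- R)"
        unfolding R_def by (simp add: sum_negf)
      finally show ?thesis .
    qed
    have rvR: "rv e R = - R" using evR by (rule int_poly_eq_ev1)
    have cR1: "coeff R (e - j) = - coeff R j" if "j \<le> e" for j
      using arg_cong[OF rvR, of "\<lambda>p. coeff p j"] that by (simp add: coeff_rv)
    have cR2: "coeff R j = 0" if "j > e" for j
      using degR that by (simp add: coeff_eq_0)
    have cG: "coeff (Gpol P x y) i = (if 2 * i < e then - coeff R i else 0)" for i
      unfolding G_eq coeff_trunc_half by auto
    have degGxy: "2 * degree (Gpol P x y) < e"
    proof (cases "Gpol P x y = 0")
      case True then show ?thesis using e0 by simp
    next
      case False
      then have "coeff (Gpol P x y) (degree (Gpol P x y)) \<noteq> 0" by simp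
      then show ?thesis unfolding cG by (auto split: if_splits)
    qed
    have rvG: "rv e (Gpol P x y) = Gpol P x y + R"
    proof (rule poly_eqI)
      fix j
      show "coeff (rv e (Gpol P x y)) j = coeff (Gpol P x y + R) j"
      proof (cases "j \<le> e")
        case False
        then show ?thesis using cR2[of j] by (simp add: coeff_rv cG)
      next
        case True
        consider "2 * j < e" | "2 * j = e" | "2 * j > e" by linarith
        then show ?thesis
        proof cases
          case 1 then show ?thesis using True by (simp add: coeff_rv cG)
        next
          case 2
          then have "e - j = j" by simp
          then have "coeff R j = 0" using cR1[of j] True by simp
          then show ?thesis using True 2 by (simp add: coeff_rv cG)
        next
          case 3
          then have "2 * (e - j) < e" using True by simp
          then show ?thesis using True 3 cR1[of "e - j"] by (simp add: coeff_rv cG)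
        qed
      qed
    qed
    have ev_final: "s ^ e * ev1 (1 / s) (Gpol P x y)
        = (\<Sum>z\<in>IIcc P x y. (s - 1) ^ (rho P z - rho P x) * ev1 s (Gpol P z y))" if s: "s \<noteq> 0" for s :: real
    proof -
      have "s ^ e * ev1 (1 / s) (Gpol P x y) = ev1 s (rv e (Gpol P x y))"
        using ev1_rv[of "Gpol P x y" e s] degGxy s by simp
      also have "\<dots> = ev1 s (Gpol P x y) + ev1 s R" by (simp add: rvG)
      also have "\<dots> = (\<Sum>z\<in>IIcc P x y. (s - 1) ^ (rho P z - rho P x) * ev1 s (Gpol P z y))"
      proof -
        have "IIcc P x y = insert x (IIoc P x y)" using xP xy by auto
        then show ?thesis using fin unfolding R_def by simp
      qed
      finally show ?thesis .
    qed
    show ?thesis using degGxy ev_final unfolding e_def by simp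
  qed
qed


lemma real_poly_zero:
  fixes Q :: "real poly"
  assumes "\<And>v. v \<noteq> 0 \<Longrightarrow> poly Q v = 0"
  shows "Q = 0"
proof (rule ccontr)
  assume "Q \<noteq> 0"
  then have "finite {x. poly Q x = 0}" by (rule poly_roots_finite)
  moreover have "{x. x \<noteq> 0} \<subseteq> {x. poly Q x = 0}" using assms by auto
  moreover have "infinite {x::real. x \<noteq> 0}"
  proof
    assume "finite {x::real. x \<noteq> 0}"
    then have "finite (insert 0 {x::real. x \<noteq> 0})" by simp
    moreover have "insert 0 {x::real. x \<noteq> 0} = UNIV" by auto
    ultimately show False by (simp add: infinite_UNIV_char_0)
  qed
  ultimately show False using finite_subset by blast
qed

lemma poly_altdef_le:
  fixes q :: "real poly"
  assumes "degree q \<le> N"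
  shows "poly q x = (\<Sum>i\<le>N. coeff q i * x ^ i)"
proof -
  have "(\<Sum>i\<le>N. coeff q i * x ^ i) = (\<Sum>i\<le>degree q. coeff q i * x ^ i)"
    by (rule sum.mono_neutral_right) (auto simp: assms coeff_eq_0)
  then show ?thesis by (simp only: poly_altdef)
qed

lemma evalB_altdef: "evalB p u v = (\<Sum>j\<le>degree p. ev1 u (coeff p j) * v ^ j)"
proof -
  have "degree (map_poly (ev1 u) p) \<le> degree p" by (rule map_poly_degree_leq)
  then show ?thesis unfolding evalB_ev1
    by (simp add: poly_altdef_le coeff_map_poly)
qed

lemma poly2_zero:
  fixes p :: "int poly poly"
  assumes deg: "2 * degree p < e"
    and ev: "\<And>u v. u \<noteq> 0 \<Longrightarrow> v \<noteq> 0 \<Longrightarrow> evalB p u v = (u * v) ^ e * evalB p (1 / u) (1 / v)"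
  shows "p = 0"
proof -
  define d where "d = degree p"
  have c0: "ev1 u (coeff p k) = 0" if u: "u \<noteq> 0" for u k
  proof (cases "k \<le> d")
    case False
    then show ?thesis by (simp add: d_def coeff_eq_0)
  next
    case True
    define Q :: "real poly" where "Q = (\<Sum>j\<le>d. monom (ev1 u (coeff p j)) j)
        - (\<Sum>j\<le>d. monom (u ^ e * ev1 (1 / u) (coeff p j)) (e - j))"
    have "poly Q v = 0" if v: "v \<noteq> 0" for v
    proof -
      have "(u * v) ^ e * evalB p (1 / u) (1 / v) = (\<Sum>j\<le>d. u ^ e * ev1 (1 / u) (coeff p j) * v ^ (e - j))"
        unfolding evalB_altdef d_def[symmetric] sum_distrib_left
      proof (intro sum.cong refl)
        fix j assume "j \<in> {..d}"
        then have "j \<le> e" using deg d_def by simp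
        then have "v ^ e = v ^ (e - j) * v ^ j" by (simp add: power_add[symmetric])
        then show "(u * v) ^ e * (ev1 (1 / u) (coeff p j) * (1 / v) ^ j) = u ^ e * ev1 (1 / u) (coeff p j) * v ^ (e - j)"
          using v by (simp add: power_mult_distrib power_one_over field_simps)
      qed
      then have "poly Q v = evalB p u v - (u * v) ^ e * evalB p (1 / u) (1 / v)"
        unfolding Q_def by (simp add: poly_sum poly_monom evalB_altdef d_def)
      then show ?thesis using ev[OF u v] by simp
    qed
    then have "Q = 0" by (rule real_poly_zero)
    then have "coeff Q k = 0" by simp
    moreover have "coeff Q k = ev1 u (coeff p k)"
    proof -
      have "coeff (\<Sum>j\<le>d. monom (u ^ e * ev1 (1 / u) (coeff p j)) (e - j)) k = 0"
        unfolding coeff_sum using True deg d_def by (intro sum.neutral) auto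
      moreover have "coeff (\<Sum>j\<le>d. monom (ev1 u (coeff p j)) j) k = ev1 u (coeff p k)"
        unfolding coeff_sum using True by (simp add: sum.delta)
      ultimately show ?thesis unfolding Q_def by (simp only: coeff_diff)
    qed
    ultimately show ?thesis by simp
  qed
  have "coeff p k = 0" for k
    using c0[of _ k] by (intro int_poly_eq_ev1[of "coeff p k" 0, simplified]) simp
  then show ?thesis by (simp add: poly_eq_iff)
qed


lemma degG_le:
  assumes eul: "eulerian P" and xP: "x \<in> P" and yP: "y \<in> P" and xy: "x \<le> y"
  shows "degree (Gpol P x y) \<le> rho P y - rho P x"
  using KLS[OF eul yP xP xy] by (cases "x = y") auto

lemma degG_lt:
  assumes eul: "eulerian P" and xP: "x \<in> P" and yP: "y \<in> P" and xy: "x < y"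
  shows "2 * degree (Gpol P x y) < rho P y - rho P x"
  using KLS[OF eul yP xP] xy by auto

lemma KLS_ev:
  assumes eul: "eulerian P" and xP: "x \<in> P" and yP: "y \<in> P" and xy: "x \<le> y" and s: "s \<noteq> 0"
  shows "s ^ (rho P y - rho P x) * ev1 (1 / s) (Gpol P x y)
        = (\<Sum>z\<in>IIcc P x y. (s - 1) ^ (rho P z - rho P x) * ev1 s (Gpol P z y))"
  using KLS[OF eul yP xP xy] s by auto

lemma Ghat_star:
  assumes eul: "eulerian P" and zP: "z \<in> P" and yP: "y \<in> P" and zy: "z \<le> y"
    and u: "u \<noteq> 0" and v: "v \<noteq> 0"
  shows "(u * v) ^ (rho P y - rho P z) * evalB (homog (rho P y - rho P z) (Gpol P z y)) (1 / u) (1 / v)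
    = (\<Sum>w\<in>IIcc P z y. (v - u) ^ (rho P w - rho P z) * evalB (homog (rho P y - rho P w) (Gpol P w y)) u v)"
proof -
  have fin: "finite P" using eul by (simp add: eulerian_def)
  define e where "e = rho P y - rho P z"
  define s where "s = v / u"
  have s0: "s \<noteq> 0" using u v by (simp add: s_def)
  have h1: "(1 / v) / (1 / u) = 1 / s" using u v by (simp add: s_def)
  have h2: "(u * v) ^ e * (1 / u) ^ e = u ^ e * s ^ e"
  proof -
    have "u * v * (1 / u) = u * s" using u by (simp add: s_def)
    then show ?thesis by (metis power_mult_distrib)
  qed
  have "(u * v) ^ e * evalB (homog e (Gpol P z y)) (1 / u) (1 / v)
      = (u * v) ^ e * ((1 / u) ^ e * ev1 (1 / s) (Gpol P z y))"
    using evalB_homog[of "Gpol P z y" e "1 / u" "1 / v"] degG_le[OF eul zP yP zy] u h1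
    by (simp add: e_def)
  also have "\<dots> = u ^ e * (s ^ e * ev1 (1 / s) (Gpol P z y))"
    using h2 by (simp only: mult.assoc[symmetric])
  also have "\<dots> = u ^ e * (\<Sum>w\<in>IIcc P z y. (s - 1) ^ (rho P w - rho P z) * ev1 s (Gpol P w y))"
    using KLS_ev[OF eul zP yP zy s0] by (simp add: e_def)
  also have "\<dots> = (\<Sum>w\<in>IIcc P z y. (v - u) ^ (rho P w - rho P z) * evalB (homog (rho P y - rho P w) (Gpol P w y)) u v)"
    unfolding sum_distrib_left
  proof (intro sum.cong refl)
    fix w assume w: "w \<in> IIcc P z y"
    have wP: "w \<in> P" and zw: "z \<le> w" and wy: "w \<le> y" using w by auto
    have r1: "rho P z \<le> rho P w" "rho P w \<le> rho P y"
      using rho_le[OF fin] zP wP yP zw wy by auto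
    have ee: "u ^ e = u ^ (rho P w - rho P z) * u ^ (rho P y - rho P w)"
      unfolding e_def power_add[symmetric] using r1 by simp
    have h3: "u * (s - 1) = v - u" using u by (simp add: s_def field_simps)
    have h4: "u ^ (rho P w - rho P z) * (s - 1) ^ (rho P w - rho P z) = (v - u) ^ (rho P w - rho P z)"
      by (simp only: power_mult_distrib[symmetric] h3)
    have h5: "evalB (homog (rho P y - rho P w) (Gpol P w y)) u v = u ^ (rho P y - rho P w) * ev1 s (Gpol P w y)"
      using evalB_homog[OF degG_le[OF eul wP yP wy] u] by (simp add: s_def)
    show "u ^ e * ((s - 1) ^ (rho P w - rho P z) * ev1 s (Gpol P w y)) =
        (v - u) ^ (rho P w - rho P z) * evalB (homog (rho P y - rho P w) (Gpol P w y)) u v"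
      unfolding h5 h4[symmetric] ee by (simp only: mult.assoc mult.commute mult.left_commute)
  qed
  finally show ?thesis by (simp add: e_def)
qed

lemma Gsub_star:
  assumes eul: "eulerian P" and xP: "x \<in> P" and yP: "y \<in> P" and xy: "x \<le> y"
    and u: "u \<noteq> 0" and v: "v \<noteq> 0"
  shows "(u * v) ^ (rho P y - rho P x) * evalB (subst_uv (Gpol P x y)) (1 / u) (1 / v)
    = (\<Sum>w\<in>IIcc P x y. (u * v - 1) ^ (rho P w - rho P x) * evalB (subst_uv (Gpol P w y)) u v)"
proof -
  have "(1 / u) * (1 / v) = 1 / (u * v)" by simp
  then show ?thesis
    using KLS_ev[OF eul xP yP xy, of "u * v"] u v by (simp add: evalB_subst_uv)
qed


lemma homog_0_1[simp]: "homog 0 1 = 1"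
  by (simp add: homog_def pCons_one)

lemma subst_uv_1[simp]: "subst_uv 1 = 1"
  using subst_uv_pCons[of 1 0] by (simp add: one_pCons)

lemma Main:
  fixes P :: "'a::order set" and B' :: "'a \<Rightarrow> 'a \<Rightarrow> int poly poly"
  assumes eul: "eulerian P" and yP: "y \<in> P"
    and a: "\<forall>x\<in>P. B' x x = 1"
    and b: "\<forall>x\<in>P. \<forall>y\<in>P. x < y \<longrightarrow> 2 * degree (B' x y) < rho P y - rho P x"
    and c: "\<forall>x\<in>P. \<forall>y\<in>P. x \<le> y \<longrightarrow> (\<forall>u v :: real. u \<noteq> 0 \<longrightarrow> v \<noteq> 0 \<longrightarrow>
              (\<Sum>z\<in>{z\<in>P. x \<le> z \<and> z \<le> y}.
                  evalB (B' x z) (1 / u) (1 / v) * (u * v) ^ (rho P z - rho P x)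
                  * (v - u) ^ (rho P y - rho P z))
            = (\<Sum>z\<in>{z\<in>P. x \<le> z \<and> z \<le> y}.
                  evalB (B' z y) u v * (u * v - 1) ^ (rho P z - rho P x)))"
  shows "x \<in> P \<Longrightarrow> x \<le> y \<Longrightarrow>
    (\<Sum>z\<in>IIcc P x y. B' x z * homog (rho P y - rho P z) (Gpol P z y)) = subst_uv (Gpol P x y)"
proof (induction "card (IIoc P x y)" arbitrary: x rule: less_induct)
  case less
  have fin: "finite P" using eul by (simp add: eulerian_def)
  have xP: "x \<in> P" using less.prems by simp
  define X where "X w = (\<Sum>z\<in>IIcc P w y. B' w z * homog (rho P y - rho P z) (Gpol P z y))" for w
  define D where "D w = X w - subst_uv (Gpol P w y)" for w
  have "D x = 0"
  proof (cases "x = y")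
    case True
    then show ?thesis using a xP by (simp add: D_def X_def IIcc_refl)
  next
    case False
    then have xy: "x < y" using less.prems by simp
    define e where "e = rho P y - rho P x"
    have finI: "finite (IIoc P x y)" using fin by simp
    have IH: "D z = 0" if z: "z \<in> IIoc P x y" for z
    proof -
      have "IIoc P z y \<subset> IIoc P x y" using z by (auto intro: order.strict_trans)
      then have "card (IIoc P z y) < card (IIoc P x y)" by (rule psubset_card_mono[OF finI])
      moreover have "z \<in> P" "z \<le> y" using z by auto
      ultimately have "(\<Sum>w\<in>IIcc P z y. B' z w * homog (rho P y - rho P w) (Gpol P w y)) = subst_uv (Gpol P z y)"
        by (rule less.hyps)
      then show ?thesis unfolding D_def X_def by simp
    qed
    have rk: "rho P x \<le> rho P z \<and> rho P z \<le> rho P y" if "z \<in> IIcc P x y" for z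
      using that rho_le[OF fin] xP yP by auto
    have e0: "e > 0" unfolding e_def using rho_mono[OF fin xP yP xy] by simp
    have evD: "evalB (D x) u v = (u * v) ^ e * evalB (D x) (1 / u) (1 / v)"
      if u: "u \<noteq> 0" and v: "v \<noteq> 0" for u v :: real
    proof -
      define Gh where "Gh w = evalB (homog (rho P y - rho P w) (Gpol P w y)) u v" for w
      have A: "(u * v) ^ e * evalB (X x) (1 / u) (1 / v)
          = (\<Sum>z\<in>IIcc P x y. (u * v - 1) ^ (rho P z - rho P x) * evalB (X z) u v)"
      proof -
        have "(u * v) ^ e * evalB (X x) (1 / u) (1 / v)
          = (\<Sum>z\<in>IIcc P x y. (evalB (B' x z) (1 / u) (1 / v) * (u * v) ^ (rho P z - rho P x)) *
               ((u * v) ^ (rho P y - rho P z) * evalB (homog (rho P y - rho P z) (Gpol P z y)) (1 / u) (1 / v)))"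
          unfolding X_def evalB_sum sum_distrib_left
        proof (intro sum.cong refl)
          fix z assume z: "z \<in> IIcc P x y"
          have ee: "(u * v) ^ e = (u * v) ^ (rho P z - rho P x) * (u * v) ^ (rho P y - rho P z)"
            unfolding e_def power_add[symmetric] using rk[OF z] by simp
          show "(u * v) ^ e * evalB (B' x z * homog (rho P y - rho P z) (Gpol P z y)) (1 / u) (1 / v) =
            evalB (B' x z) (1 / u) (1 / v) * (u * v) ^ (rho P z - rho P x) *
            ((u * v) ^ (rho P y - rho P z) * evalB (homog (rho P y - rho P z) (Gpol P z y)) (1 / u) (1 / v))"
            unfolding ee evalB_mult by (simp only: mult.assoc mult.commute mult.left_commute)
        qed
        also have "\<dots> = (\<Sum>z\<in>IIcc P x y. \<Sum>w\<in>IIcc P z y.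
            evalB (B' x z) (1 / u) (1 / v) * (u * v) ^ (rho P z - rho P x) * (v - u) ^ (rho P w - rho P z) * Gh w)"
        proof (intro sum.cong refl)
          fix z assume z: "z \<in> IIcc P x y"
          have zP: "z \<in> P" and zy: "z \<le> y" using z by auto
          show "evalB (B' x z) (1 / u) (1 / v) * (u * v) ^ (rho P z - rho P x) *
            ((u * v) ^ (rho P y - rho P z) * evalB (homog (rho P y - rho P z) (Gpol P z y)) (1 / u) (1 / v)) =
            (\<Sum>w\<in>IIcc P z y. evalB (B' x z) (1 / u) (1 / v) * (u * v) ^ (rho P z - rho P x) * (v - u) ^ (rho P w - rho P z) * Gh w)"
            unfolding Ghat_star[OF eul zP yP zy u v] sum_distrib_left Gh_def
            by (simp only: mult.assoc)
        qed
        also have "\<dots> = (\<Sum>w\<in>IIcc P x y. \<Sum>z\<in>IIcc P x w.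
            evalB (B' x z) (1 / u) (1 / v) * (u * v) ^ (rho P z - rho P x) * (v - u) ^ (rho P w - rho P z) * Gh w)"
          by (rule swap_Icc[OF fin])
        also have "\<dots> = (\<Sum>w\<in>IIcc P x y. (\<Sum>z\<in>IIcc P x w.
            evalB (B' x z) (1 / u) (1 / v) * (u * v) ^ (rho P z - rho P x) * (v - u) ^ (rho P w - rho P z)) * Gh w)"
          by (simp only: sum_distrib_right)
        also have "\<dots> = (\<Sum>w\<in>IIcc P x y. (\<Sum>z\<in>IIcc P x w.
            evalB (B' z w) u v * (u * v - 1) ^ (rho P z - rho P x)) * Gh w)"
        proof (intro sum.cong refl)
          fix w assume w: "w \<in> IIcc P x y"
          then have wP: "w \<in> P" and xw: "x \<le> w" by auto
          have "(\<Sum>z\<in>IIcc P x w. evalB (B' x z) (1 / u) (1 / v) * (u * v) ^ (rho P z - rho P x) * (v - u) ^ (rho P w - rho P z)) =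
              (\<Sum>z\<in>IIcc P x w. evalB (B' z w) u v * (u * v - 1) ^ (rho P z - rho P x))"
            using c xP wP xw u v by blast
          then show "(\<Sum>z\<in>IIcc P x w. evalB (B' x z) (1 / u) (1 / v) * (u * v) ^ (rho P z - rho P x) * (v - u) ^ (rho P w - rho P z)) * Gh w =
              (\<Sum>z\<in>IIcc P x w. evalB (B' z w) u v * (u * v - 1) ^ (rho P z - rho P x)) * Gh w"
            by simp
        qed
        also have "\<dots> = (\<Sum>w\<in>IIcc P x y. \<Sum>z\<in>IIcc P x w.
            (u * v - 1) ^ (rho P z - rho P x) * (evalB (B' z w) u v * Gh w))"
          by (simp only: sum_distrib_right sum_distrib_left mult.assoc mult.commute mult.left_commute)
        also have "\<dots> = (\<Sum>z\<in>IIcc P x y. \<Sum>w\<in>IIcc P z y.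
            (u * v - 1) ^ (rho P z - rho P x) * (evalB (B' z w) u v * Gh w))"
          by (rule swap_Icc[OF fin, symmetric])
        also have "\<dots> = (\<Sum>z\<in>IIcc P x y. (u * v - 1) ^ (rho P z - rho P x) * evalB (X z) u v)"
          unfolding X_def evalB_sum evalB_mult sum_distrib_left Gh_def by simp
        finally show ?thesis .
      qed
      have B: "(u * v) ^ e * evalB (subst_uv (Gpol P x y)) (1 / u) (1 / v)
          = (\<Sum>z\<in>IIcc P x y. (u * v - 1) ^ (rho P z - rho P x) * evalB (subst_uv (Gpol P z y)) u v)"
        unfolding e_def by (rule Gsub_star[OF eul xP yP less.prems(2) u v])
      have "(u * v) ^ e * evalB (D x) (1 / u) (1 / v)
          = (\<Sum>z\<in>IIcc P x y. (u * v - 1) ^ (rho P z - rho P x) * evalB (D z) u v)"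
        unfolding D_def evalB_diff right_diff_distrib A B sum_subtractf[symmetric] by simp
      also have "\<dots> = evalB (D x) u v"
      proof -
        have "IIcc P x y = insert x (IIoc P x y)" using xP xy by auto
        then show ?thesis using fin IH by simp
      qed
      finally show ?thesis by simp
    qed
    define N where "N = (e - 1) div 2"
    have toN: "d \<le> N" if "2 * d < e" for d using that unfolding N_def by linarith
    have dX: "degree (X x) \<le> N"
      unfolding X_def
    proof (rule degree_sum_le)
      fix z assume z: "z \<in> IIcc P x y"
      have zP: "z \<in> P" and xz: "x \<le> z" and zy: "z \<le> y" using z by auto
      have key: "2 * (degree (B' x z) + degree (Gpol P z y)) < e"
      proof (cases "z = x")
        case True
        then show ?thesis using a xP degG_lt[OF eul xP yP xy] by (simp add: e_def)
      next
        case zx: False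
        show ?thesis
        proof (cases "z = y")
          case True
          then show ?thesis using b xP yP xy by (simp add: e_def)
        next
          case False
          have "x < z" "z < y" using zx False xz zy by auto
          then have "2 * degree (B' x z) < rho P z - rho P x" "2 * degree (Gpol P z y) < rho P y - rho P z"
            using b xP zP degG_lt[OF eul zP yP] by auto
          then show ?thesis using rk[OF z] unfolding e_def by arith
        qed
      qed
      have "degree (B' x z * homog (rho P y - rho P z) (Gpol P z y)) \<le> degree (B' x z) + degree (homog (rho P y - rho P z) (Gpol P z y))"
        by (rule degree_mult_le)
      also have "\<dots> \<le> degree (B' x z) + degree (Gpol P z y)"
        using degree_homog by (simp add: add_left_mono)
      also have "\<dots> \<le> N" using toN key by simp
      finally show "degree (B' x z * homog (rho P y - rho P z) (Gpol P z y)) \<le> N" .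
    qed (use fin in simp)
    have dY: "degree (subst_uv (Gpol P x y)) \<le> N"
      using degree_subst_uv[of "Gpol P x y"] toN[OF degG_lt[OF eul xP yP xy, folded e_def]] by simp
    have "degree (D x) \<le> N" unfolding D_def using dX dY by (rule degree_diff_le)
    then have "2 * degree (D x) < e" using e0 unfolding N_def by linarith
    then show "D x = 0" using evD by (rule poly2_zero)
  qed
  then show ?case unfolding D_def X_def by simp
qed


theorem proposition2p12:
  fixes P :: "'a::order set" and B' :: "'a \<Rightarrow> 'a \<Rightarrow> int poly poly"
  assumes eul: "eulerian P"
    and a: "\<forall>x\<in>P. B' x x = 1"
    and b: "\<forall>x\<in>P. \<forall>y\<in>P. x < y \<longrightarrow> 2 * degree (B' x y) < rho P y - rho P x"
    and c: "\<forall>x\<in>P. \<forall>y\<in>P. x \<le> y \<longrightarrow> (\<forall>u v :: real. u \<noteq> 0 \<longrightarrow> v \<noteq> 0 \<longrightarrow>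
              (\<Sum>z\<in>{z\<in>P. x \<le> z \<and> z \<le> y}.
                  evalB (B' x z) (1 / u) (1 / v) * (u * v) ^ (rho P z - rho P x)
                  * (v - u) ^ (rho P y - rho P z))
            = (\<Sum>z\<in>{z\<in>P. x \<le> z \<and> z \<le> y}.
                  evalB (B' z y) u v * (u * v - 1) ^ (rho P z - rho P x)))"
  shows "\<forall>x\<in>P. \<forall>y\<in>P. x \<le> y \<longrightarrow> B' x y = Bpol P x y"
proof (intro ballI impI)
  fix x y assume xP: "x \<in> P" and yP: "y \<in> P" and xy: "x \<le> y"
  have fin: "finite P" using eul by (simp add: eulerian_def)
  show "B' x y = Bpol P x y"
    using yP xy
  proof (induction "card {z\<in>P. x \<le> z \<and> z < y}" arbitrary: y rule: less_induct)
    case less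
    show ?case
    proof (cases "x = y")
      case True
      then show ?thesis using a xP by simp
    next
      case False
      then have xy': "x < y" using less.prems by simp
      define S where "S = {z\<in>P. x \<le> z \<and> z < y}"
      have finS: "finite S" using fin by (simp add: S_def)
      have IH: "B' x z = Bpol P x z" if z: "z \<in> S" for z
      proof -
        have "{w\<in>P. x \<le> w \<and> w < z} \<subset> S"
          using z by (auto simp: S_def intro: order.strict_trans2)
        then have "card {w\<in>P. x \<le> w \<and> w < z} < card S" by (rule psubset_card_mono[OF finS])
        then show ?thesis using z less.hyps[of z] by (simp add: S_def)
      qed
      have M: "(\<Sum>z\<in>IIcc P x y. B' x z * homog (rho P y - rho P z) (Gpol P z y)) = subst_uv (Gpol P x y)"
        by (rule Main[OF eul less.prems(1) a b c xP less.prems(2)])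
      have "IIcc P x y = insert y S" using less.prems xy' by (auto simp: S_def)
      then have "(\<Sum>z\<in>IIcc P x y. B' x z * homog (rho P y - rho P z) (Gpol P z y))
          = B' x y + (\<Sum>z\<in>S. B' x z * homog (rho P y - rho P z) (Gpol P z y))"
        using finS by (simp add: S_def)
      also have "(\<Sum>z\<in>S. B' x z * homog (rho P y - rho P z) (Gpol P z y))
          = (\<Sum>z\<in>S. Bpol P x z * homog (rho P y - rho P z) (Gpol P z y))"
        using IH by simp
      finally have "B' x y = subst_uv (Gpol P x y) - (\<Sum>z\<in>S. Bpol P x z * homog (rho P y - rho P z) (Gpol P z y))"
        using M by (simp add: algebra_simps)
      then show ?thesis using Bpol_rec[OF fin xP xy'] by (simp add: S_def)
    qed
  qed
qed

end
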